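(* Fix $y\in\mathbb{R}$, a bandwidth $h>0$, a kernel $K$, integers $m,n\ge1$, and real observations $Y_1,\dots,Y_{n+1}$ (held fixed). Let $\Theta\subset\mathbb{R}^m$ be a convex open set. For a configuration $x=(x_1,\dots,x_{n+1})\in\{1,\dots,m\}^{n+1}$ and $\theta=(\theta_1,\dots,\theta_m)\in\Theta$ let $$U(\theta;x)=\frac{1}{nh}\sum_{k=1}^n\sum_{i=1}^mK_h(y-Y_k)\mathbf{1}_i(x_{k+1})(Y_{k+1}-\theta_i)^2.$$ Let $\pi$ be a fixed probability distribution on $\{1,\dots,m\}^{n+1}$ (the conditional law of the hidden states given the observations under a fixed parameter), and set $$u(\theta)=\frac{1}{nh}\sum_{k=1}^n\sum_{i=1}^mK_h(y-Y_k)\,\pi(x_{k+1}=i)\,(Y_{k+1}-\theta_i)^2 .$$ Let $X^1,X^2,\dots$ be random configurations such that, for each $t\ge1$, conditionally on $\mathcal{F}_{t-1}=\sigma(X^1,\dots,X^{t-1})$, $X^t$ has law $\pi$. Given $\theta^0\in\Theta$, define recursively $\theta^t=\theta^{t-1}-\gamma_t\nabla_\theta U(\theta^{t-1};X^t)$ and $\bar\theta^t=\frac1t\sum_{k=1}^t\theta^k$ (with $\bar\theta^0=\theta^0$). Assume $\{\gamma_t\}$ is a positive sequence with $\sum_t\gamma_t=\infty$ and $\sum_t\gamma_t^2<\infty$, and that the closure of $\{\bar\theta^t\}$ is a compact subset of $\Theta$. Then, almost surely, $\lim_{t\to\infty}\nabla_\theta u(\bar\theta^t)=0$; furthermore $\lim_{t\to\infty}\bar\theta^t=\theta^*$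 with $\nabla_\theta u(\theta^* )=0$, almost surely.
   Context: $K_h(v)=K(v/h)$ and $\mathbf{1}_i(x)$ is the indicator of $x=i$; $\pi(x_{k+1}=i)$ is the $\pi$-probability that the $(k+1)$-th coordinate equals $i$. In the paper's algorithm $\pi$ is the conditional distribution $p(X_{1:n}\mid Y_{0:n},\theta')$ of the hidden Markov regime of an MS-NAR model given the observations, sampled by a Carter–Kohn forward-filtering backward-sampling step, and $u$ is the conditional expectation of $U$ given $\mathcal{F}_{t-1}$. *)

theory Defs
  imports "HOL-Probability.Probability"
begin

definition is_kernel :: "(real \<Rightarrow> real) \<Rightarrow> bool" where
  "is_kernel K \<longleftrightarrow> (\<forall>v. K v \<ge> 0) \<and> integrable lborel K \<and> (\<integral>v. K v \<partial>lborel) = 1"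

definition Kh :: "(real \<Rightarrow> real) \<Rightarrow> real \<Rightarrow> real \<Rightarrow> real" where
  "Kh K h v = K (v / h)"

definition grad :: "(real ^ 'm \<Rightarrow> real) \<Rightarrow> real ^ 'm \<Rightarrow> real ^ 'm" where
  "grad f \<theta> = (THE g. (f has_derivative (\<lambda>v. g \<bullet> v)) (at \<theta>))"

text \<open>Configurations x = (x_1,...,x_{n+1}) with values in the regime set 'm
  (which plays the role of {1..m}, m = CARD('m)); extensional outside {1..n+1}.\<close>
definition Cfg :: "nat \<Rightarrow> (nat \<Rightarrow> 'm) set" where
  "Cfg n = PiE {1..n+1} (\<lambda>_. UNIV)"

definition U :: "real \<Rightarrow> real \<Rightarrow> (real \<Rightarrow> real) \<Rightarrow> (nat \<Rightarrow> real) \<Rightarrow> nat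
    \<Rightarrow> (nat \<Rightarrow> 'm::finite) \<Rightarrow> real ^ 'm \<Rightarrow> real" where
  "U y h K Y n x \<theta> = (1 / (real n * h)) *
     (\<Sum>k=1..n. \<Sum>i\<in>UNIV. Kh K h (y - Y k) * (if x (k+1) = i then 1 else 0) * (Y (k+1) - \<theta> $ i)\<^sup>2)"

definition u :: "real \<Rightarrow> real \<Rightarrow> (real \<Rightarrow> real) \<Rightarrow> (nat \<Rightarrow> real) \<Rightarrow> nat
    \<Rightarrow> (nat \<Rightarrow> 'm::finite) pmf \<Rightarrow> real ^ 'm \<Rightarrow> real" where
  "u y h K Y n \<pi> \<theta> = (1 / (real n * h)) *
     (\<Sum>k=1..n. \<Sum>i\<in>UNIV. Kh K h (y - Y k) * measure_pmf.prob \<pi> {x. x (k+1) = i} * (Y (k+1) - \<theta> $ i)\<^sup>2)"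

fun sgd :: "real \<Rightarrow> real \<Rightarrow> (real \<Rightarrow> real) \<Rightarrow> (nat \<Rightarrow> real) \<Rightarrow> nat
    \<Rightarrow> real ^ 'm::finite \<Rightarrow> (nat \<Rightarrow> real) \<Rightarrow> (nat \<Rightarrow> nat \<Rightarrow> 'm) \<Rightarrow> nat \<Rightarrow> real ^ 'm" where
  "sgd y h K Y n \<theta>0 \<gamma> X 0 = \<theta>0"
| "sgd y h K Y n \<theta>0 \<gamma> X (Suc t) =
     sgd y h K Y n \<theta>0 \<gamma> X t - \<gamma> (Suc t) *\<^sub>R grad (U y h K Y n (X (Suc t))) (sgd y h K Y n \<theta>0 \<gamma> X t)"

definition sgd_avg :: "real \<Rightarrow> real \<Rightarrow> (real \<Rightarrow> real) \<Rightarrow> (nat \<Rightarrow> real) \<Rightarrow> nat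
    \<Rightarrow> real ^ 'm::finite \<Rightarrow> (nat \<Rightarrow> real) \<Rightarrow> (nat \<Rightarrow> nat \<Rightarrow> 'm) \<Rightarrow> nat \<Rightarrow> real ^ 'm" where
  "sgd_avg y h K Y n \<theta>0 \<gamma> X t =
     (if t = 0 then \<theta>0 else (1 / real t) *\<^sub>R (\<Sum>k=1..t. sgd y h K Y n \<theta>0 \<gamma> X k))"

end

theory Submission
  imports Defs
begin

lemma det_conv:
  fixes a s g e :: "nat \<Rightarrow> real"
  assumes qbd: "\<exists>T. \<forall>t\<ge>T. 0 \<le> a t * s t \<and> a t * s t \<le> 1"
   and nsum: "\<not> summable (\<lambda>t. a t * s t)"
   and gsum: "summable g"
   and rec: "\<And>t. e (Suc t) = (1 - a (Suc t) * s (Suc t)) * e t + g (Suc t)"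
  shows "e \<longlonglongrightarrow> 0"
proof -
  define q where "q t = a t * s t" for t
  define r where "r t = suminf g - (\<Sum>i<Suc t. g i)" for t
  have r0: "r \<longlonglongrightarrow> 0"
  proof -
    have "(\<lambda>t. (\<Sum>i<Suc t. g i)) \<longlonglongrightarrow> suminf g"
      using summable_LIMSEQ[OF gsum] by (rule LIMSEQ_Suc)
    hence "(\<lambda>t. suminf g - (\<Sum>i<Suc t. g i)) \<longlonglongrightarrow> suminf g - suminf g"
      by (intro tendsto_intros)
    thus ?thesis by (simp add: r_def[abs_def] del: sum.lessThan_Suc)
  qed
  have rr: "r t = g (Suc t) + r (Suc t)" for t by (simp add: r_def)
  define d where "d t = e t + r t" for t
  have drec: "d (Suc t) = (1 - q (Suc t)) * d t + q (Suc t) * r t" for t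
    unfolding d_def q_def rec rr[of t] by (simp add: algebra_simps)
  obtain T0 where T0: "\<And>t. t \<ge> T0 \<Longrightarrow> 0 \<le> q t \<and> q t \<le> 1" using qbd q_def by auto
  show ?thesis
  proof (rule LIMSEQ_I)
    fix rr :: real assume "0 < rr"
    define \<epsilon> where "\<epsilon> = rr / 4"
    have ep: "\<epsilon> > 0" using \<open>0 < rr\<close> by (simp add: \<epsilon>_def)
    obtain T1 where T1: "\<And>t. t \<ge> T1 \<Longrightarrow> norm (r t) < \<epsilon>"
      using LIMSEQ_D[OF r0 ep] by auto
    define T where "T = max T0 T1"
    define \<phi> where "\<phi> t = max (\<bar>d t\<bar> - \<epsilon>) 0" for t
    have step: "\<phi> (Suc t) \<le> (1 - q (Suc t)) * \<phi> t" if "t \<ge> T" for t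
    proof -
      have q: "0 \<le> q (Suc t)" "q (Suc t) \<le> 1" using T0[of "Suc t"] that by (auto simp: T_def)
      have rt: "\<bar>r t\<bar> < \<epsilon>" using T1[of t] that by (auto simp: T_def)
      have "\<bar>d (Suc t)\<bar> \<le> (1 - q (Suc t)) * \<bar>d t\<bar> + q (Suc t) * \<bar>r t\<bar>"
        unfolding drec using q abs_triangle_ineq[of "(1 - q (Suc t)) * d t" "q (Suc t) * r t"]
        by (simp add: abs_mult)
      also have "\<dots> \<le> (1 - q (Suc t)) * \<bar>d t\<bar> + q (Suc t) * \<epsilon>"
        using q rt by (intro add_left_mono mult_left_mono) auto
      finally have A: "\<bar>d (Suc t)\<bar> - \<epsilon> \<le> (1 - q (Suc t)) * (\<bar>d t\<bar> - \<epsilon>)"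
        by (simp add: algebra_simps)
      have B: "(1 - q (Suc t)) * (\<bar>d t\<bar> - \<epsilon>) \<le> (1 - q (Suc t)) * \<phi> t"
        using q by (intro mult_left_mono) (auto simp: \<phi>_def)
      have C: "0 \<le> (1 - q (Suc t)) * \<phi> t" using q by (auto simp: \<phi>_def)
      show ?thesis using A B C by (simp add: \<phi>_def)
    qed
    have phinn: "\<phi> t \<ge> 0" for t by (simp add: \<phi>_def)
    have mono: "\<phi> (t + k) \<le> \<phi> t" if "t \<ge> T" for t k
    proof (induction k)
      case (Suc k)
      have "\<phi> (Suc (t + k)) \<le> (1 - q (Suc (t+k))) * \<phi> (t+k)" using step[of "t+k"] that by simp
      also have "\<dots> \<le> \<phi> (t + k)"
        using T0[of "Suc (t+k)"] that phinn[of "t+k"] by (auto simp: T_def algebra_simps)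
      finally show ?case using Suc by simp
    qed simp
    have "\<exists>t1\<ge>T. \<phi> t1 \<le> \<epsilon>"
    proof (rule ccontr)
      assume "\<not> ?thesis"
      hence big: "\<And>t. t \<ge> T \<Longrightarrow> \<phi> t > \<epsilon>" by (meson not_le)
      have tel: "\<epsilon> * (\<Sum>j<k. q (Suc (T + j))) \<le> \<phi> T - \<phi> (T + k)" for k
      proof (induction k)
        case (Suc k)
        have s: "\<phi> (Suc (T + k)) \<le> \<phi> (T+k) - q (Suc (T+k)) * \<phi> (T+k)"
          using step[of "T+k"] by (simp add: algebra_simps)
        have "q (Suc (T+k)) * \<epsilon> \<le> q (Suc (T+k)) * \<phi> (T+k)"
          using big[of "T+k"] T0[of "Suc (T+k)"] by (intro mult_left_mono) (auto simp: T_def)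
        thus ?case using Suc s by (simp add: algebra_simps)
      qed simp
      have "summable (\<lambda>j. q (Suc (T + j)))"
      proof (rule summableI_nonneg_bounded)
        fix j show "0 \<le> q (Suc (T + j))" using T0[of "Suc (T+j)"] by (auto simp: T_def)
      next
        fix k
        have "\<epsilon> * (\<Sum>j<k. q (Suc (T + j))) \<le> \<phi> T" using tel[of k] phinn[of "T+k"] by simp
        thus "(\<Sum>j<k. q (Suc (T + j))) \<le> \<phi> T / \<epsilon>" using ep by (simp add: field_simps mult.commute)
      qed
      hence "summable (\<lambda>j. q (j + Suc T))" by (simp add: add.commute)
      hence "summable q" by (rule summable_iff_shift[THEN iffD1])
      thus False using nsum by (simp add: q_def[abs_def])
    qed
    then obtain t1 where t1: "t1 \<ge> T" "\<phi> t1 \<le> \<epsilon>" by auto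
    show "\<exists>N. \<forall>n\<ge>N. norm (e n - 0) < rr"
    proof (intro exI allI impI)
      fix n assume "n \<ge> t1"
      then obtain k where k: "n = t1 + k" using le_Suc_ex by blast
      have "\<phi> n \<le> \<epsilon>" using mono[of t1 k] t1 k by simp
      hence "\<bar>d n\<bar> \<le> 2 * \<epsilon>" by (simp add: \<phi>_def)
      moreover have "\<bar>r n\<bar> < \<epsilon>" using T1[of n] \<open>n \<ge> t1\<close> t1 by (auto simp: T_def)
      ultimately have "\<bar>e n\<bar> < 3 * \<epsilon>" unfolding d_def by linarith
      thus "norm (e n - 0) < rr" using ep by (simp add: \<epsilon>_def)
    qed
  qed
qed

lemma has_derivative_vec_nth' [derivative_intros]:
  "((\<lambda>\<theta>::real^'m. \<theta> $ i) has_derivative (\<lambda>v. v $ i)) F"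
  by (rule bounded_linear_imp_has_derivative) (rule bounded_linear_vec_nth)

lemma grad_unique:
  fixes f :: "real ^ 'm \<Rightarrow> real"
  assumes "(f has_derivative (\<lambda>v. g \<bullet> v)) (at \<theta>)"
  shows "grad f \<theta> = g"
  unfolding grad_def
proof (rule the_equality)
  show "(f has_derivative (\<lambda>v. g \<bullet> v)) (at \<theta>)" by fact
next
  fix g' assume "(f has_derivative (\<lambda>v. g' \<bullet> v)) (at \<theta>)"
  from has_derivative_unique[OF assms this] have "\<And>v. g \<bullet> v = g' \<bullet> v" by metis
  hence "(g - g') \<bullet> (g - g') = 0" by (simp add: inner_diff_left inner_diff_right)
  thus "g' = g" by simp
qed

lemma grad_quad:
  fixes W :: "nat \<Rightarrow> real" and \<rho> :: "nat \<Rightarrow> 'm::finite \<Rightarrow> real" and Z :: "nat \<Rightarrow> real"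
  shows "grad (\<lambda>\<theta>::real^'m. C * (\<Sum>k=1..n. \<Sum>i\<in>UNIV. W k * \<rho> k i * (Z k - \<theta>$i)\<^sup>2)) \<theta>
     = (\<chi> i. -2 * C * (\<Sum>k=1..n. W k * \<rho> k i * (Z k - \<theta>$i)))"
proof (rule grad_unique)
  have "((\<lambda>\<theta>::real^'m. C * (\<Sum>k=1..n. \<Sum>i\<in>UNIV. W k * \<rho> k i * (Z k - \<theta>$i)\<^sup>2)) has_derivative
     (\<lambda>v. C * (\<Sum>k=1..n. \<Sum>i\<in>UNIV. W k * \<rho> k i * (2 * (Z k - \<theta>$i) * (- (v$i)))))) (at \<theta>)"
    by (auto intro!: derivative_eq_intros simp: power2_eq_square algebra_simps)
  moreover have "(\<lambda>v. C * (\<Sum>k=1..n. \<Sum>i\<in>UNIV. W k * \<rho> k i * (2 * (Z k - \<theta>$i) * (- (v$i)))))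
     = (\<lambda>v. (\<chi> i. -2 * C * (\<Sum>k=1..n. W k * \<rho> k i * (Z k - \<theta>$i))) \<bullet> v)"
    by (auto simp: inner_vec_def sum_distrib_left sum_distrib_right intro!: ext sum.cong
        | subst sum.swap)+ 
  ultimately show "((\<lambda>\<theta>::real^'m. C * (\<Sum>k=1..n. \<Sum>i\<in>UNIV. W k * \<rho> k i * (Z k - \<theta>$i)\<^sup>2)) has_derivative
     (\<lambda>v. (\<chi> i. -2 * C * (\<Sum>k=1..n. W k * \<rho> k i * (Z k - \<theta>$i))) \<bullet> v)) (at \<theta>)" by simp
qed

lemma cesaro_real:
  fixes x :: "nat \<Rightarrow> real"
  assumes "x \<longlonglongrightarrow> L"
  shows "(\<lambda>t. (1 / real t) * (\<Sum>k=1..t. x k)) \<longlonglongrightarrow> L"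
proof -
  define y where "y k = x k - L" for k
  have y0: "y \<longlonglongrightarrow> 0" using assms unfolding y_def by (simp add: LIM_zero)
  have avg0: "(\<lambda>t. (1 / real t) * (\<Sum>k=1..t. y k)) \<longlonglongrightarrow> 0"
  proof (rule LIMSEQ_I)
    fix r :: real assume r: "r > 0"
    obtain N where N: "\<And>k. k \<ge> N \<Longrightarrow> norm (y k) < r / 2" using LIMSEQ_D[OF y0, of "r/2"] r by auto
    define C where "C = (\<Sum>k=1..N. \<bar>y k\<bar>)"
    have C0: "C \<ge> 0" by (simp add: C_def sum_nonneg)
    obtain N2 :: nat where N2: "N2 > 2 * C / r" using reals_Archimedean2 by blast
    show "\<exists>no. \<forall>t\<ge>no. norm ((1 / real t) * (\<Sum>k=1..t. y k) - 0) < r"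
    proof (intro exI allI impI)
      fix t assume t: "t \<ge> max (Suc N) N2"
      have tpos: "real t > 0" using t by auto
      have bnd: "\<bar>y k\<bar> \<le> (if k \<le> N then \<bar>y k\<bar> else 0) + r / 2" for k
        using N[of k] r by auto
      have "\<bar>\<Sum>k=1..t. y k\<bar> \<le> (\<Sum>k=1..t. \<bar>y k\<bar>)" by (rule sum_abs)
      also have "\<dots> \<le> (\<Sum>k=1..t. (if k \<le> N then \<bar>y k\<bar> else 0) + r / 2)"
        by (rule sum_mono) (rule bnd)
      also have "\<dots> = (\<Sum>k=1..t. (if k \<le> N then \<bar>y k\<bar> else 0)) + real t * (r / 2)"
        by (simp add: sum.distrib)
      also have "(\<Sum>k=1..t. (if k \<le> N then \<bar>y k\<bar> else 0)) = C"
      proof -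
        have "(\<Sum>k=1..t. (if k \<le> N then \<bar>y k\<bar> else 0)) = (\<Sum>k\<in>{1..t} \<inter> {k. k \<le> N}. \<bar>y k\<bar>)"
          by (simp add: sum.inter_restrict)
        also have "{1..t} \<inter> {k. k \<le> N} = {1..N}" using t by auto
        finally show ?thesis by (simp add: C_def)
      qed
      finally have A: "\<bar>\<Sum>k=1..t. y k\<bar> \<le> C + real t * (r / 2)" .
      have "r * real N2 \<le> r * real t" using t r by (intro mult_left_mono) auto
      moreover have "2 * C < r * real N2" using N2 r by (simp add: field_simps)
      moreover have "real t * (r / 2) = (r * real t) / 2" by simp
      ultimately have "C < real t * (r / 2)" by linarith
      hence "\<bar>\<Sum>k=1..t. y k\<bar> < real t * r" using A by linarith
      thus "norm ((1 / real t) * (\<Sum>k=1..t. y k) - 0) < r" using tpos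
        by (simp add: abs_mult field_simps)
    qed
  qed
  have eq: "(1 / real t) * (\<Sum>k=1..t. x k) = L + (1 / real t) * (\<Sum>k=1..t. y k)" if "t \<ge> 1" for t
    using that by (simp add: y_def sum_subtractf field_simps)
  have "(\<lambda>t. L + (1 / real t) * (\<Sum>k=1..t. y k)) \<longlonglongrightarrow> L + 0"
    by (intro tendsto_intros avg0)
  hence "(\<lambda>t. L + (1 / real t) * (\<Sum>k=1..t. y k)) \<longlonglongrightarrow> L" by simp
  thus ?thesis
  proof (rule Lim_transform_eventually)
    show "\<forall>\<^sub>F t in sequentially. L + (1 / real t) * (\<Sum>k=1..t. y k) = (1 / real t) * (\<Sum>k=1..t. x k)"
      by (rule eventually_sequentiallyI[of 1]) (rule eq[symmetric])
  qed
qed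

lemma cesaro_vec:
  fixes \<theta> :: "nat \<Rightarrow> real^'m::finite"
  assumes "\<theta> \<longlonglongrightarrow> L"
  shows "(\<lambda>t. if t = 0 then \<theta>0 else (1 / real t) *\<^sub>R (\<Sum>k=1..t. \<theta> k)) \<longlonglongrightarrow> L"
proof (rule vec_tendstoI)
  fix i
  have "(\<lambda>t. \<theta> t $ i) \<longlonglongrightarrow> L $ i" using assms by (rule tendsto_vec_nth)
  hence c: "(\<lambda>t. (1 / real t) * (\<Sum>k=1..t. \<theta> k $ i)) \<longlonglongrightarrow> L $ i" by (rule cesaro_real)
  show "((\<lambda>t. (if t = 0 then \<theta>0 else (1 / real t) *\<^sub>R (\<Sum>k=1..t. \<theta> k)) $ i) \<longlonglongrightarrow> L $ i)"
  proof (rule Lim_transform_eventually[OF c])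
    show "\<forall>\<^sub>F t in sequentially. (1 / real t) * (\<Sum>k=1..t. \<theta> k $ i) = (if t = 0 then \<theta>0 else (1 / real t) *\<^sub>R (\<Sum>k=1..t. \<theta> k)) $ i"
      by (rule eventually_sequentiallyI[of 1]) (simp add: sum_component)
  qed
qed

lemma finite_Cfg: "finite (Cfg n :: (nat \<Rightarrow> 'm::finite) set)"
  unfolding Cfg_def by (intro finite_PiE) auto

locale ssetup = prob_space M for M :: "'w measure" +
  fixes X :: "nat \<Rightarrow> 'w \<Rightarrow> (nat \<Rightarrow> 'm::finite)" and \<pi> :: "(nat \<Rightarrow> 'm) pmf" and n :: nat
  assumes X_meas: "\<And>t. t \<ge> 1 \<Longrightarrow> X t \<in> M \<rightarrow>\<^sub>M count_space UNIV"
    and X_cfg: "\<And>t \<omega>. t \<ge> 1 \<Longrightarrow> \<omega> \<in> space M \<Longrightarrow> X t \<omega> \<in> Cfg n"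
    and X_cond_law: "\<And>t S B. t \<ge> 1 \<Longrightarrow>
          measure M {\<omega> \<in> space M. (\<lambda>s\<in>{1..<t}. X s \<omega>) \<in> S \<and> X t \<omega> \<in> B}
        = measure M {\<omega> \<in> space M. (\<lambda>s\<in>{1..<t}. X s \<omega>) \<in> S} * measure_pmf.prob \<pi> B"
begin

definition P :: "nat \<Rightarrow> 'w \<Rightarrow> (nat \<Rightarrow> nat \<Rightarrow> 'm)" where
  "P j \<omega> = (\<lambda>s\<in>{1..<j}. X s \<omega>)"

definition F :: "nat \<Rightarrow> (nat \<Rightarrow> nat \<Rightarrow> 'm) set" where
  "F j = PiE {1..<j} (\<lambda>_. Cfg n)"

lemma finite_F: "finite (F j)"
  unfolding F_def by (intro finite_PiE finite_Cfg) auto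

lemma P_in: "\<omega> \<in> space M \<Longrightarrow> P j \<omega> \<in> F j"
  unfolding P_def F_def using X_cfg by auto

lemma X_level: "t \<ge> 1 \<Longrightarrow> {\<omega> \<in> space M. X t \<omega> = x} \<in> sets M"
  using measurable_sets[OF X_meas[of t], of "{x}"] by (simp add: vimage_def Int_def conj_commute)

lemma P_level: "{\<omega> \<in> space M. P j \<omega> = v} \<in> sets M"
proof (cases "v \<in> extensional {1..<j}")
  case True
  have "{\<omega> \<in> space M. P j \<omega> = v} = {\<omega> \<in> space M. \<forall>s\<in>{1..<j}. X s \<omega> = v s}"
    using True by (auto simp: P_def extensional_def fun_eq_iff)
  also have "\<dots> \<in> sets M"
    by (intro sets.sets_Collect_finite_All X_level) auto
  finally show ?thesis .
next
  case False
  hence "{\<omega> \<in> space M. P j \<omega> = v} = {}" by (auto simp: P_def)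
  thus ?thesis by (metis (no_types) sets.empty_sets)
qed

lemma P_set: "{\<omega> \<in> space M. Q (P j \<omega>)} \<in> sets M"
proof -
  have "{\<omega> \<in> space M. Q (P j \<omega>)} = (\<Union>v\<in>{v\<in>F j. Q v}. {\<omega> \<in> space M. P j \<omega> = v})"
    using P_in by auto
  also have "\<dots> \<in> sets M" using finite_F P_level by (intro sets.finite_UN) auto
  finally show ?thesis .
qed

lemma PX_level: "j \<ge> 1 \<Longrightarrow> {\<omega> \<in> space M. P j \<omega> = v \<and> X j \<omega> = x} \<in> sets M"
proof -
  assume j: "j \<ge> 1"
  have "{\<omega> \<in> space M. P j \<omega> = v \<and> X j \<omega> = x} = {\<omega> \<in> space M. P j \<omega> = v} \<inter> {\<omega> \<in> space M. X j \<omega> = x}"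
    by auto
  thus ?thesis using P_level X_level[OF j] by auto
qed

lemma fin_expect:
  fixes g :: "'a \<Rightarrow> real"
  assumes QA: "\<And>\<omega>. \<omega> \<in> space M \<Longrightarrow> Q \<omega> \<in> A" and fA: "finite A"
    and lev: "\<And>a. a \<in> A \<Longrightarrow> {\<omega> \<in> space M. Q \<omega> = a} \<in> sets M"
  shows "integrable M (\<lambda>\<omega>. g (Q \<omega>))"
    and "integral\<^sup>L M (\<lambda>\<omega>. g (Q \<omega>)) = (\<Sum>a\<in>A. g a * measure M {\<omega> \<in> space M. Q \<omega> = a})"
proof -
  have eq: "g (Q \<omega>) = (\<Sum>a\<in>A. g a * indicator {\<omega> \<in> space M. Q \<omega> = a} \<omega>)" if "\<omega> \<in> space M" for \<omega>
  proof -
    have "(\<Sum>a\<in>A. g a * indicator {\<omega> \<in> space M. Q \<omega> = a} \<omega>) = (\<Sum>a\<in>A. if a = Q \<omega> then g a else 0)"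
      using that by (intro sum.cong) (auto simp: indicator_def)
    also have "\<dots> = g (Q \<omega>)" using QA[OF that] fA by simp
    finally show ?thesis by simp
  qed
  have fin: "emeasure M A' < \<top>" for A' using emeasure_finite[of A'] by (metis less_top)
  have int: "integrable M (\<lambda>\<omega>. g a * indicator {\<omega> \<in> space M. Q \<omega> = a} \<omega>)" if "a \<in> A" for a
    using lev[OF that] by (intro integrable_mult_right) (simp add: integrable_indicator_iff fin)
  show "integrable M (\<lambda>\<omega>. g (Q \<omega>))"
    using int by (subst Bochner_Integration.integrable_cong[OF refl eq]) auto
  have "integral\<^sup>L M (\<lambda>\<omega>. g (Q \<omega>)) = integral\<^sup>L M (\<lambda>\<omega>. \<Sum>a\<in>A. g a * indicator {\<omega> \<in> space M. Q \<omega> = a} \<omega>)"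
    by (rule Bochner_Integration.integral_cong[OF refl eq])
  also have "\<dots> = (\<Sum>a\<in>A. integral\<^sup>L M (\<lambda>\<omega>. g a * indicator {\<omega> \<in> space M. Q \<omega> = a} \<omega>))"
    by (rule Bochner_Integration.integral_sum) (rule int)
  also have "\<dots> = (\<Sum>a\<in>A. g a * measure M {\<omega> \<in> space M. Q \<omega> = a})"
    by (intro sum.cong refl) (simp add: Int_absorb2)
  finally show "integral\<^sup>L M (\<lambda>\<omega>. g (Q \<omega>)) = (\<Sum>a\<in>A. g a * measure M {\<omega> \<in> space M. Q \<omega> = a})" .
qed

definition dep :: "nat \<Rightarrow> ('w \<Rightarrow> real) \<Rightarrow> bool" where
  "dep j \<Phi> \<longleftrightarrow> (\<exists>G. \<forall>\<omega>\<in>space M. \<Phi> \<omega> = G (P j \<omega>))"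

lemma dep_integrable: "dep j \<Phi> \<Longrightarrow> integrable M \<Phi>"
proof -
  assume "dep j \<Phi>"
  then obtain G where G: "\<And>\<omega>. \<omega> \<in> space M \<Longrightarrow> \<Phi> \<omega> = G (P j \<omega>)" by (auto simp: dep_def)
  have "integrable M (\<lambda>\<omega>. G (P j \<omega>))"
    by (rule fin_expect(1)[OF P_in finite_F P_level])
  moreover have "integrable M \<Phi> \<longleftrightarrow> integrable M (\<lambda>\<omega>. G (P j \<omega>))"
    by (rule Bochner_Integration.integrable_cong) (auto simp: G)
  ultimately show ?thesis by simp
qed

lemma dep_mono: "dep j \<Phi> \<Longrightarrow> j \<le> j' \<Longrightarrow> dep j' \<Phi>"
proof -
  assume "dep j \<Phi>" "j \<le> j'"
  then obtain G where G: "\<And>\<omega>. \<omega> \<in> space M \<Longrightarrow> \<Phi> \<omega> = G (P j \<omega>)" by (auto simp: dep_def)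
  have "P j \<omega> = restrict (P j' \<omega>) {1..<j}" for \<omega>
    using \<open>j \<le> j'\<close> by (auto simp: P_def restrict_def fun_eq_iff)
  thus ?thesis using G unfolding dep_def by (intro exI[of _ "\<lambda>v. G (restrict v {1..<j})"]) auto
qed

lemma dep_X: "1 \<le> s \<Longrightarrow> s < j \<Longrightarrow> dep j (\<lambda>\<omega>. h (X s \<omega>))"
  unfolding dep_def by (intro exI[of _ "\<lambda>v. h (v s)"]) (auto simp: P_def)

lemma dep_const: "dep j (\<lambda>\<omega>. c)"
  unfolding dep_def by (intro exI[of _ "\<lambda>v. c"]) auto

lemma dep_comp2: "dep j \<Phi> \<Longrightarrow> dep j \<Psi> \<Longrightarrow> dep j (\<lambda>\<omega>. h (\<Phi> \<omega>) (\<Psi> \<omega>))"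
proof -
  assume "dep j \<Phi>" "dep j \<Psi>"
  then obtain G H where "\<And>\<omega>. \<omega> \<in> space M \<Longrightarrow> \<Phi> \<omega> = G (P j \<omega>)" "\<And>\<omega>. \<omega> \<in> space M \<Longrightarrow> \<Psi> \<omega> = H (P j \<omega>)"
    by (auto simp: dep_def)
  thus ?thesis unfolding dep_def by (intro exI[of _ "\<lambda>v. h (G v) (H v)"]) auto
qed

lemma dep_comp: "dep j \<Phi> \<Longrightarrow> dep j (\<lambda>\<omega>. h (\<Phi> \<omega>))"
  using dep_comp2[of j \<Phi> \<Phi> "\<lambda>a b. h a"] by simp

lemma dep_sum: "finite S \<Longrightarrow> (\<And>t. t \<in> S \<Longrightarrow> dep j (\<Phi> t)) \<Longrightarrow> dep j (\<lambda>\<omega>. \<Sum>t\<in>S. \<Phi> t \<omega>)"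
proof (induction S rule: finite_induct)
  case empty thus ?case by (simp add: dep_const)
next
  case (insert x S)
  have "dep j (\<lambda>\<omega>. \<Phi> x \<omega> + (\<Sum>t\<in>S. \<Phi> t \<omega>))"
    using insert by (intro dep_comp2[of j _ _ "(+)"]) auto
  thus ?case using insert by simp
qed

lemma dep_set_indicator: "dep j \<Phi> \<Longrightarrow> {\<omega> \<in> space M. Q (\<Phi> \<omega>)} \<in> sets M"
proof -
  assume "dep j \<Phi>"
  then obtain G where G: "\<And>\<omega>. \<omega> \<in> space M \<Longrightarrow> \<Phi> \<omega> = G (P j \<omega>)" by (auto simp: dep_def)
  have "{\<omega> \<in> space M. Q (\<Phi> \<omega>)} = {\<omega> \<in> space M. Q (G (P j \<omega>))}" using G by auto
  thus ?thesis using P_set by simp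
qed

definition mean0 :: "((nat \<Rightarrow> 'm) \<Rightarrow> real) \<Rightarrow> bool" where
  "mean0 f \<longleftrightarrow> (\<Sum>x\<in>Cfg n. f x * pmf \<pi> x) = 0"

lemma orth:
  assumes j: "j \<ge> 1" and d: "dep j \<Phi>" and m: "mean0 f"
  shows "integral\<^sup>L M (\<lambda>\<omega>. \<Phi> \<omega> * f (X j \<omega>)) = 0"
proof -
  obtain G where G: "\<And>\<omega>. \<omega> \<in> space M \<Longrightarrow> \<Phi> \<omega> = G (P j \<omega>)" using d by (auto simp: dep_def)
  have "integral\<^sup>L M (\<lambda>\<omega>. \<Phi> \<omega> * f (X j \<omega>)) = integral\<^sup>L M (\<lambda>\<omega>. (\<lambda>(v,x). G v * f x) (P j \<omega>, X j \<omega>))"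
    by (rule Bochner_Integration.integral_cong[OF refl]) (simp add: G)
  also have "\<dots> = (\<Sum>a\<in>F j \<times> Cfg n. (\<lambda>(v,x). G v * f x) a * measure M {\<omega> \<in> space M. (P j \<omega>, X j \<omega>) = a})"
    by (rule fin_expect(2)) (auto simp: P_in finite_F finite_Cfg intro: X_cfg[OF j] PX_level[OF j])
  also have "\<dots> = (\<Sum>v\<in>F j. \<Sum>x\<in>Cfg n. G v * f x * measure M {\<omega> \<in> space M. P j \<omega> = v \<and> X j \<omega> = x})"
    by (auto simp: sum.cartesian_product intro!: sum.cong)
  also have "\<dots> = (\<Sum>v\<in>F j. \<Sum>x\<in>Cfg n. G v * f x * (measure M {\<omega> \<in> space M. P j \<omega> = v} * pmf \<pi> x))"
  proof (intro sum.cong refl)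
    fix v x
    have "measure M {\<omega> \<in> space M. P j \<omega> = v \<and> X j \<omega> = x}
        = measure M {\<omega> \<in> space M. (\<lambda>s\<in>{1..<j}. X s \<omega>) \<in> {v} \<and> X j \<omega> \<in> {x}}"
      by (simp add: P_def)
    also have "\<dots> = measure M {\<omega> \<in> space M. P j \<omega> = v} * pmf \<pi> x"
      using X_cond_law[OF j, of "{v}" "{x}"] by (simp add: P_def measure_pmf_single)
    finally show "G v * f x * measure M {\<omega> \<in> space M. P j \<omega> = v \<and> X j \<omega> = x}
        = G v * f x * (measure M {\<omega> \<in> space M. P j \<omega> = v} * pmf \<pi> x)" by simp
  qed
  also have "\<dots> = (\<Sum>v\<in>F j. G v * measure M {\<omega> \<in> space M. P j \<omega> = v} * (\<Sum>x\<in>Cfg n. f x * pmf \<pi> x))"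
    by (intro sum.cong refl) (simp add: sum_distrib_left sum_distrib_right mult_ac)
  also have "\<dots> = 0" using m by (simp add: mean0_def)
  finally show ?thesis .
qed

lemma X_in_support: "t \<ge> 1 \<Longrightarrow> AE \<omega> in M. X t \<omega> \<in> set_pmf \<pi>"
proof -
  assume t: "t \<ge> 1"
  have S: "{\<omega> \<in> space M. \<not> X t \<omega> \<in> set_pmf \<pi>} \<in> sets M"
    using measurable_sets[OF X_meas[OF t], of "- set_pmf \<pi>"] by (simp add: vimage_def Int_def conj_commute)
  have "measure M {\<omega> \<in> space M. \<not> X t \<omega> \<in> set_pmf \<pi>}
      = measure M {\<omega> \<in> space M. (\<lambda>s\<in>{1..<t}. X s \<omega>) \<in> UNIV \<and> X t \<omega> \<in> - set_pmf \<pi>}" by simp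
  also have "\<dots> = measure M {\<omega> \<in> space M. (\<lambda>s\<in>{1..<t}. X s \<omega>) \<in> UNIV} * measure_pmf.prob \<pi> (- set_pmf \<pi>)"
    by (rule X_cond_law[OF t])
  also have "measure_pmf.prob \<pi> (- set_pmf \<pi>) = 0"
    by (simp add: measure_pmf_zero_iff)
  finally have "measure M {\<omega> \<in> space M. \<not> X t \<omega> \<in> set_pmf \<pi>} = 0" by simp
  thus ?thesis using S by (subst AE_iff_null) (auto simp: emeasure_eq_measure null_sets_def)
qed

end

context ssetup begin

definition T :: "(nat \<Rightarrow> real) \<Rightarrow> ((nat \<Rightarrow> 'm) \<Rightarrow> real) \<Rightarrow> nat \<Rightarrow> nat \<Rightarrow> 'w \<Rightarrow> real" where
  "T a f N m \<omega> = (\<Sum>t\<in>{Suc N..<Suc m}. a t * f (X t \<omega>))"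

definition GT :: "(nat \<Rightarrow> real) \<Rightarrow> ((nat \<Rightarrow> 'm) \<Rightarrow> real) \<Rightarrow> nat \<Rightarrow> nat \<Rightarrow> (nat \<Rightarrow> nat \<Rightarrow> 'm) \<Rightarrow> real" where
  "GT a f N j v = (\<Sum>t\<in>{Suc N..<Suc j}. a t * f (v t))"

lemma T_P: "j < i \<Longrightarrow> T a f N j \<omega> = GT a f N j (P i \<omega>)"
  unfolding T_def P_def GT_def by (intro sum.cong) auto

lemma T_dep: "dep (Suc m) (T a f N m)"
  unfolding dep_def by (intro exI[of _ "GT a f N m"]) (simp add: T_P)

lemma T_Suc: "N \<le> m \<Longrightarrow> T a f N (Suc m) \<omega> = T a f N m \<omega> + a (Suc m) * f (X (Suc m) \<omega>)"
  unfolding T_def by (subst sum.atLeastLessThan_Suc) auto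

lemma T_self: "T a f N N \<omega> = 0"
  unfolding T_def by simp

lemma energy:
  assumes Nk: "N \<le> k" and km: "k \<le> m" and d: "dep (Suc k) \<Phi>" and mf: "mean0 f"
  shows "integral\<^sup>L M (\<lambda>\<omega>. (T a f N m \<omega>)\<^sup>2 * \<Phi> \<omega>)
       = integral\<^sup>L M (\<lambda>\<omega>. (T a f N k \<omega>)\<^sup>2 * \<Phi> \<omega>)
         + (\<Sum>t\<in>{Suc k..<Suc m}. integral\<^sup>L M (\<lambda>\<omega>. (a t * f (X t \<omega>))\<^sup>2 * \<Phi> \<omega>))"
  using km
proof (induction m rule: dec_induct)
  case base thus ?case by simp
next
  case (step m)
  define D where "D \<omega> = a (Suc m) * f (X (Suc m) \<omega>)" for \<omega>
  have dPhi: "dep (Suc (Suc m)) \<Phi>" by (rule dep_mono[OF d]) (use step(1) in simp)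
  have dT: "dep (Suc (Suc m)) (T a f N m)" using T_dep by (rule dep_mono) simp
  have dD: "dep (Suc (Suc m)) D" unfolding D_def by (rule dep_X) auto
  have dTPhi: "dep (Suc m) (\<lambda>\<omega>. T a f N m \<omega> * \<Phi> \<omega>)"
    by (rule dep_comp2[OF T_dep dep_mono[OF d]]) (use step(1) in simp)
  have eq: "(T a f N (Suc m) \<omega>)\<^sup>2 * \<Phi> \<omega> = (T a f N m \<omega>)\<^sup>2 * \<Phi> \<omega>
      + 2 * a (Suc m) * ((T a f N m \<omega> * \<Phi> \<omega>) * f (X (Suc m) \<omega>)) + (D \<omega>)\<^sup>2 * \<Phi> \<omega>" for \<omega>
    using Nk step(1) by (simp add: T_Suc D_def power2_eq_square algebra_simps)
  have i1: "integrable M (\<lambda>\<omega>. (T a f N m \<omega>)\<^sup>2 * \<Phi> \<omega>)"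
    by (rule dep_integrable[OF dep_comp2[OF dT dPhi]])
  have i2: "integrable M (\<lambda>\<omega>. 2 * a (Suc m) * ((T a f N m \<omega> * \<Phi> \<omega>) * f (X (Suc m) \<omega>)))"
    by (rule dep_integrable[OF dep_comp2[OF dep_comp2[OF dT dPhi] dep_X[of "Suc m" "Suc (Suc m)"]]]) auto
  have i3: "integrable M (\<lambda>\<omega>. (D \<omega>)\<^sup>2 * \<Phi> \<omega>)"
    by (rule dep_integrable[OF dep_comp2[OF dD dPhi]])
  have "integral\<^sup>L M (\<lambda>\<omega>. (T a f N (Suc m) \<omega>)\<^sup>2 * \<Phi> \<omega>)
      = integral\<^sup>L M (\<lambda>\<omega>. (T a f N m \<omega>)\<^sup>2 * \<Phi> \<omega>)
      + integral\<^sup>L M (\<lambda>\<omega>. 2 * a (Suc m) * ((T a f N m \<omega> * \<Phi> \<omega>) * f (X (Suc m) \<omega>)))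
      + integral\<^sup>L M (\<lambda>\<omega>. (D \<omega>)\<^sup>2 * \<Phi> \<omega>)"
    unfolding eq
    by (simp only: Bochner_Integration.integral_add[OF Bochner_Integration.integrable_add[OF i1 i2] i3]
      Bochner_Integration.integral_add[OF i1 i2])
  also have "integral\<^sup>L M (\<lambda>\<omega>. 2 * a (Suc m) * ((T a f N m \<omega> * \<Phi> \<omega>) * f (X (Suc m) \<omega>)))
      = 2 * a (Suc m) * integral\<^sup>L M (\<lambda>\<omega>. (T a f N m \<omega> * \<Phi> \<omega>) * f (X (Suc m) \<omega>))"
    by simp
  also have "integral\<^sup>L M (\<lambda>\<omega>. (T a f N m \<omega> * \<Phi> \<omega>) * f (X (Suc m) \<omega>)) = 0"
    by (rule orth[OF _ dTPhi mf]) simp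
  finally have A: "integral\<^sup>L M (\<lambda>\<omega>. (T a f N (Suc m) \<omega>)\<^sup>2 * \<Phi> \<omega>)
      = integral\<^sup>L M (\<lambda>\<omega>. (T a f N m \<omega>)\<^sup>2 * \<Phi> \<omega>)
      + integral\<^sup>L M (\<lambda>\<omega>. (a (Suc m) * f (X (Suc m) \<omega>))\<^sup>2 * \<Phi> \<omega>)"
    unfolding D_def by simp
  have S: "(\<Sum>t\<in>{Suc k..<Suc (Suc m)}. integral\<^sup>L M (\<lambda>\<omega>. (a t * f (X t \<omega>))\<^sup>2 * \<Phi> \<omega>))
     = (\<Sum>t\<in>{Suc k..<Suc m}. integral\<^sup>L M (\<lambda>\<omega>. (a t * f (X t \<omega>))\<^sup>2 * \<Phi> \<omega>))
       + integral\<^sup>L M (\<lambda>\<omega>. (a (Suc m) * f (X (Suc m) \<omega>))\<^sup>2 * \<Phi> \<omega>)"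
    by (rule sum.atLeastLessThan_Suc) (use step(1) in simp)
  show ?case using A S step(3) by linarith
qed

lemma kolm:
  assumes ep: "\<epsilon> > 0" and NL: "N \<le> L" and mf: "mean0 f"
    and fb: "\<And>x. x \<in> Cfg n \<Longrightarrow> \<bar>f x\<bar> \<le> Fb"
  shows "\<epsilon>\<^sup>2 * measure M {\<omega> \<in> space M. \<exists>m\<in>{Suc N..L}. \<epsilon> \<le> \<bar>T a f N m \<omega>\<bar>}
       \<le> Fb\<^sup>2 * (\<Sum>t\<in>{Suc N..<Suc L}. (a t)\<^sup>2)"
proof -
  define E where "E = {\<omega> \<in> space M. \<exists>m\<in>{Suc N..L}. \<epsilon> \<le> \<bar>T a f N m \<omega>\<bar>}"
  define Ind where "Ind k \<omega> = (if \<epsilon> \<le> \<bar>T a f N k \<omega>\<bar> \<and> (\<forall>j\<in>{Suc N..<k}. \<bar>T a f N j \<omega>\<bar> < \<epsilon>) then 1 else 0 :: real)" for k \<omega>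
  have Ind_dep: "dep (Suc k) (Ind k)" for k
  proof -
    define G where "G v = (if \<epsilon> \<le> \<bar>GT a f N k v\<bar>
          \<and> (\<forall>j\<in>{Suc N..<k}. \<bar>GT a f N j v\<bar> < \<epsilon>) then 1 else 0 :: real)" for v
    have "\<forall>\<omega>\<in>space M. Ind k \<omega> = G (P (Suc k) \<omega>)"
      unfolding Ind_def G_def by (simp add: T_P[where i="Suc k"])
    thus ?thesis unfolding dep_def by blast
  qed
  have Ind_nn: "0 \<le> Ind k \<omega>" for k \<omega> by (simp add: Ind_def)
  define QE where "QE v = (\<exists>m\<in>{Suc N..L}. \<epsilon> \<le> \<bar>GT a f N m v\<bar>)" for v
  have E_dep: "\<forall>\<omega>\<in>space M. (\<exists>m\<in>{Suc N..L}. \<epsilon> \<le> \<bar>T a f N m \<omega>\<bar>) = QE (P (Suc L) \<omega>)"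
    unfolding QE_def by (simp add: T_P[where i="Suc L"])
  have E_sets: "E \<in> sets M"
  proof -
    have "E = {\<omega> \<in> space M. QE (P (Suc L) \<omega>)}"
      unfolding E_def using E_dep by blast
    thus ?thesis using P_set[of QE "Suc L"] by simp
  qed
  have indE: "indicator E \<omega> = (\<Sum>k\<in>{Suc N..L}. Ind k \<omega>)" if "\<omega> \<in> space M" for \<omega>
  proof (cases "\<omega> \<in> E")
    case True
    then obtain m where m: "m \<in> {Suc N..L}" "\<epsilon> \<le> \<bar>T a f N m \<omega>\<bar>" by (auto simp: E_def)
    define k where "k = (LEAST k. k \<in> {Suc N..L} \<and> \<epsilon> \<le> \<bar>T a f N k \<omega>\<bar>)"
    have k: "k \<in> {Suc N..L} \<and> \<epsilon> \<le> \<bar>T a f N k \<omega>\<bar>"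
      unfolding k_def using m by (intro LeastI) auto
    have kmin: "\<And>j. j \<in> {Suc N..L} \<Longrightarrow> \<epsilon> \<le> \<bar>T a f N j \<omega>\<bar> \<Longrightarrow> k \<le> j"
      unfolding k_def by (rule Least_le) auto
    have "Ind j \<omega> = (if j = k then 1 else 0)" if "j \<in> {Suc N..L}" for j
    proof (cases "j = k")
      case True
      have "\<forall>i\<in>{Suc N..<k}. \<bar>T a f N i \<omega>\<bar> < \<epsilon>"
        using kmin k by (meson atLeastAtMost_iff atLeastLessThan_iff not_le order.strict_trans2 less_imp_le)
      thus ?thesis using True k by (simp add: Ind_def)
    next
      case False
      show ?thesis
      proof (cases "j < k")
        case True thus ?thesis using kmin[of j] that by (auto simp: Ind_def)
      next
        case False': False
        hence "k \<in> {Suc N..<j}" using False k by auto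
        hence "\<exists>i\<in>{Suc N..<j}. \<not> \<bar>T a f N i \<omega>\<bar> < \<epsilon>" using k by (metis not_less)
        thus ?thesis using False by (auto simp: Ind_def)
      qed
    qed
    hence "(\<Sum>j\<in>{Suc N..L}. Ind j \<omega>) = (\<Sum>j\<in>{Suc N..L}. if j = k then 1 else 0)"
      by (intro sum.cong) auto
    also have "\<dots> = 1" using k by simp
    finally show ?thesis using True by simp
  next
    case False
    hence "Ind j \<omega> = 0" if "j \<in> {Suc N..L}" for j using that \<open>\<omega> \<in> space M\<close>
      by (auto simp: Ind_def E_def)
    thus ?thesis using False by simp
  qed
  have TL: "dep (Suc L) (\<lambda>\<omega>. (T a f N L \<omega>)\<^sup>2)" by (rule dep_comp[OF T_dep])
  have step1: "\<epsilon>\<^sup>2 * measure M E = (\<Sum>k\<in>{Suc N..L}. integral\<^sup>L M (\<lambda>\<omega>. \<epsilon>\<^sup>2 * Ind k \<omega>))"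
  proof -
    have "measure M E = integral\<^sup>L M (indicator E)" using E_sets by (simp add: Int_absorb2 sets.sets_into_space)
    also have "\<dots> = integral\<^sup>L M (\<lambda>\<omega>. \<Sum>k\<in>{Suc N..L}. Ind k \<omega>)"
      by (rule Bochner_Integration.integral_cong[OF refl]) (simp add: indE)
    also have "\<dots> = (\<Sum>k\<in>{Suc N..L}. integral\<^sup>L M (Ind k))"
      by (rule Bochner_Integration.integral_sum) (rule dep_integrable[OF Ind_dep])
    finally show ?thesis by (simp add: sum_distrib_left)
  qed
  have step2: "integral\<^sup>L M (\<lambda>\<omega>. \<epsilon>\<^sup>2 * Ind k \<omega>) \<le> integral\<^sup>L M (\<lambda>\<omega>. (T a f N L \<omega>)\<^sup>2 * Ind k \<omega>)"
    if k: "k \<in> {Suc N..L}" for k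
  proof -
    have "integral\<^sup>L M (\<lambda>\<omega>. \<epsilon>\<^sup>2 * Ind k \<omega>) \<le> integral\<^sup>L M (\<lambda>\<omega>. (T a f N k \<omega>)\<^sup>2 * Ind k \<omega>)"
    proof (rule integral_mono)
      show "integrable M (\<lambda>\<omega>. \<epsilon>\<^sup>2 * Ind k \<omega>)" by (rule dep_integrable[OF dep_comp[OF Ind_dep]])
      show "integrable M (\<lambda>\<omega>. (T a f N k \<omega>)\<^sup>2 * Ind k \<omega>)"
        by (rule dep_integrable[OF dep_comp2[OF T_dep Ind_dep]])
      fix \<omega>
      show "\<epsilon>\<^sup>2 * Ind k \<omega> \<le> (T a f N k \<omega>)\<^sup>2 * Ind k \<omega>"
      proof (cases "Ind k \<omega> = 0")
        case False
        hence "\<epsilon> \<le> \<bar>T a f N k \<omega>\<bar>" by (auto simp: Ind_def split: if_splits)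
        hence "\<bar>\<epsilon>\<bar> \<le> \<bar>T a f N k \<omega>\<bar>" using ep by simp
        hence "\<epsilon>\<^sup>2 \<le> (T a f N k \<omega>)\<^sup>2" by (simp add: abs_le_square_iff)
        thus ?thesis using Ind_nn[of k \<omega>] by (rule mult_right_mono)
      qed simp
    qed
    also have "\<dots> \<le> integral\<^sup>L M (\<lambda>\<omega>. (T a f N L \<omega>)\<^sup>2 * Ind k \<omega>)"
    proof -
      have "integral\<^sup>L M (\<lambda>\<omega>. (T a f N L \<omega>)\<^sup>2 * Ind k \<omega>) = integral\<^sup>L M (\<lambda>\<omega>. (T a f N k \<omega>)\<^sup>2 * Ind k \<omega>)
         + (\<Sum>t\<in>{Suc k..<Suc L}. integral\<^sup>L M (\<lambda>\<omega>. (a t * f (X t \<omega>))\<^sup>2 * Ind k \<omega>))"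
        using k by (intro energy Ind_dep mf) auto
      moreover have "0 \<le> (\<Sum>t\<in>{Suc k..<Suc L}. integral\<^sup>L M (\<lambda>\<omega>. (a t * f (X t \<omega>))\<^sup>2 * Ind k \<omega>))"
        using Ind_nn by (intro sum_nonneg integral_nonneg) auto
      ultimately show ?thesis by simp
    qed
    finally show ?thesis .
  qed
  have step3: "(\<Sum>k\<in>{Suc N..L}. integral\<^sup>L M (\<lambda>\<omega>. (T a f N L \<omega>)\<^sup>2 * Ind k \<omega>))
      \<le> integral\<^sup>L M (\<lambda>\<omega>. (T a f N L \<omega>)\<^sup>2)"
  proof -
    have "(\<Sum>k\<in>{Suc N..L}. integral\<^sup>L M (\<lambda>\<omega>. (T a f N L \<omega>)\<^sup>2 * Ind k \<omega>))
        = integral\<^sup>L M (\<lambda>\<omega>. \<Sum>k\<in>{Suc N..L}. (T a f N L \<omega>)\<^sup>2 * Ind k \<omega>)"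
      by (rule Bochner_Integration.integral_sum[symmetric])
         (rule dep_integrable[OF dep_comp2[OF dep_mono[OF T_dep] dep_mono[OF Ind_dep]]], auto)
    also have "\<dots> \<le> integral\<^sup>L M (\<lambda>\<omega>. (T a f N L \<omega>)\<^sup>2)"
    proof (rule integral_mono)
      show "integrable M (\<lambda>\<omega>. \<Sum>k\<in>{Suc N..L}. (T a f N L \<omega>)\<^sup>2 * Ind k \<omega>)"
        by (intro Bochner_Integration.integrable_sum)
           (rule dep_integrable[OF dep_comp2[OF dep_mono[OF T_dep] dep_mono[OF Ind_dep]]], auto)
      show "integrable M (\<lambda>\<omega>. (T a f N L \<omega>)\<^sup>2)" by (rule dep_integrable[OF TL])
      fix \<omega> assume w: "\<omega> \<in> space M"
      have "(\<Sum>k\<in>{Suc N..L}. (T a f N L \<omega>)\<^sup>2 * Ind k \<omega>) = (T a f N L \<omega>)\<^sup>2 * indicator E \<omega>"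
        by (simp add: indE[OF w] sum_distrib_left)
      also have "\<dots> \<le> (T a f N L \<omega>)\<^sup>2" by (simp add: indicator_def)
      finally show "(\<Sum>k\<in>{Suc N..L}. (T a f N L \<omega>)\<^sup>2 * Ind k \<omega>) \<le> (T a f N L \<omega>)\<^sup>2" .
    qed
    finally show ?thesis .
  qed
  have step4: "integral\<^sup>L M (\<lambda>\<omega>. (T a f N L \<omega>)\<^sup>2) \<le> Fb\<^sup>2 * (\<Sum>t\<in>{Suc N..<Suc L}. (a t)\<^sup>2)"
  proof -
    have "integral\<^sup>L M (\<lambda>\<omega>. (T a f N L \<omega>)\<^sup>2 * 1) = integral\<^sup>L M (\<lambda>\<omega>. (T a f N N \<omega>)\<^sup>2 * 1)
         + (\<Sum>t\<in>{Suc N..<Suc L}. integral\<^sup>L M (\<lambda>\<omega>. (a t * f (X t \<omega>))\<^sup>2 * 1))"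
      using NL by (intro energy dep_const mf) auto
    also have "\<dots> = (\<Sum>t\<in>{Suc N..<Suc L}. integral\<^sup>L M (\<lambda>\<omega>. (a t * f (X t \<omega>))\<^sup>2))"
      by (simp add: T_self)
    also have "\<dots> \<le> (\<Sum>t\<in>{Suc N..<Suc L}. Fb\<^sup>2 * (a t)\<^sup>2)"
    proof (rule sum_mono)
      fix t assume t: "t \<in> {Suc N..<Suc L}"
      have "integral\<^sup>L M (\<lambda>\<omega>. (a t * f (X t \<omega>))\<^sup>2) \<le> integral\<^sup>L M (\<lambda>\<omega>. Fb\<^sup>2 * (a t)\<^sup>2)"
      proof (rule integral_mono)
        show "integrable M (\<lambda>\<omega>. (a t * f (X t \<omega>))\<^sup>2)"
          by (rule dep_integrable[OF dep_X[of t "Suc t"]]) (use t in auto)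
        show "integrable M (\<lambda>\<omega>. Fb\<^sup>2 * (a t)\<^sup>2)" by simp
        fix \<omega> assume w: "\<omega> \<in> space M"
        have "\<bar>f (X t \<omega>)\<bar> \<le> Fb" using fb X_cfg t w by auto
        hence "(f (X t \<omega>))\<^sup>2 \<le> Fb\<^sup>2" by (metis abs_ge_zero abs_le_square_iff abs_of_nonneg order.trans)
        thus "(a t * f (X t \<omega>))\<^sup>2 \<le> Fb\<^sup>2 * (a t)\<^sup>2"
          by (simp add: power_mult_distrib mult.commute[of "Fb\<^sup>2"] mult_left_mono)
      qed
      thus "integral\<^sup>L M (\<lambda>\<omega>. (a t * f (X t \<omega>))\<^sup>2) \<le> Fb\<^sup>2 * (a t)\<^sup>2" by (simp add: prob_space)
    qed
    finally show ?thesis by (simp only: sum_distrib_left mult_1_right)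
  qed
  have "\<epsilon>\<^sup>2 * measure M E \<le> (\<Sum>k\<in>{Suc N..L}. integral\<^sup>L M (\<lambda>\<omega>. (T a f N L \<omega>)\<^sup>2 * Ind k \<omega>))"
    unfolding step1 by (rule sum_mono) (rule step2)
  with step3 step4 show ?thesis unfolding E_def by linarith
qed

end

context ssetup begin

lemma T_level: "{\<omega> \<in> space M. Q (T a f N m \<omega>)} \<in> sets M"
  by (rule dep_set_indicator[OF T_dep])

lemma as_summable:
  assumes mf: "mean0 f" and sq: "summable (\<lambda>t. (a t)\<^sup>2)"
  shows "AE \<omega> in M. summable (\<lambda>t. a t * f (X t \<omega>))"
proof -
  define Fb where "Fb = (\<Sum>x\<in>Cfg n. \<bar>f x\<bar>)"
  have fb: "\<And>x. x \<in> Cfg n \<Longrightarrow> \<bar>f x\<bar> \<le> Fb"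
    unfolding Fb_def by (rule member_le_sum) (auto simp: finite_Cfg)
  define R where "R N = suminf (\<lambda>t. (a t)\<^sup>2) - (\<Sum>t<Suc N. (a t)\<^sup>2)" for N
  have R0: "R \<longlonglongrightarrow> 0"
  proof -
    have "(\<lambda>N. (\<Sum>t<Suc N. (a t)\<^sup>2)) \<longlonglongrightarrow> suminf (\<lambda>t. (a t)\<^sup>2)"
      using summable_LIMSEQ[OF sq] by (rule LIMSEQ_Suc)
    hence "(\<lambda>N. suminf (\<lambda>t. (a t)\<^sup>2) - (\<Sum>t<Suc N. (a t)\<^sup>2)) \<longlonglongrightarrow> suminf (\<lambda>t. (a t)\<^sup>2) - suminf (\<lambda>t. (a t)\<^sup>2)"
      by (intro tendsto_intros)
    thus ?thesis by (simp add: R_def[abs_def] del: sum.lessThan_Suc)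
  qed
  have Rb: "(\<Sum>t\<in>{Suc N..<Suc L}. (a t)\<^sup>2) \<le> R N" if "N \<le> L" for N L
  proof -
    have "(\<Sum>t<Suc N. (a t)\<^sup>2) + (\<Sum>t\<in>{Suc N..<Suc L}. (a t)\<^sup>2) = (\<Sum>t<Suc L. (a t)\<^sup>2)"
      using sum.atLeastLessThan_concat[of 0 "Suc N" "Suc L" "\<lambda>t. (a t)\<^sup>2"] that
      by (simp add: atLeast0LessThan del: sum.lessThan_Suc sum.atLeastLessThan_Suc)
    moreover have "(\<Sum>t<Suc L. (a t)\<^sup>2) \<le> suminf (\<lambda>t. (a t)\<^sup>2)"
      by (rule sum_le_suminf[OF sq]) auto
    ultimately show ?thesis unfolding R_def by linarith
  qed
  define E where "E \<epsilon> N L = {\<omega> \<in> space M. \<exists>m\<in>{Suc N..L}. \<epsilon> \<le> \<bar>T a f N m \<omega>\<bar>}" for \<epsilon> N L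
  define B where "B \<epsilon> N = {\<omega> \<in> space M. \<exists>m. Suc N \<le> m \<and> \<epsilon> \<le> \<bar>T a f N m \<omega>\<bar>}" for \<epsilon> N
  define Bad where "Bad \<epsilon> = {\<omega> \<in> space M. \<forall>N. \<exists>m. Suc N \<le> m \<and> \<epsilon> \<le> \<bar>T a f N m \<omega>\<bar>}" for \<epsilon>
  have lev: "{\<omega> \<in> space M. Suc N \<le> m \<and> \<epsilon> \<le> \<bar>T a f N m \<omega>\<bar>} \<in> sets M" for \<epsilon> N m
  proof (cases "Suc N \<le> m")
    case True thus ?thesis using T_level[of "\<lambda>x. \<epsilon> \<le> \<bar>x\<bar>" a f N m] by simp
  next
    case False thus ?thesis by simp
  qed
  have E_sets: "E \<epsilon> N L \<in> sets M" for \<epsilon> N L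
  proof -
    have "E \<epsilon> N L = {\<omega> \<in> space M. \<exists>m\<in>{Suc N..L}. \<epsilon> \<le> \<bar>T a f N m \<omega>\<bar>}" by (simp add: E_def)
    also have "\<dots> \<in> sets M" by (intro sets.sets_Collect_finite_Ex T_level) auto
    finally show ?thesis .
  qed
  have B_sets: "B \<epsilon> N \<in> sets M" for \<epsilon> N
    unfolding B_def by (intro sets.sets_Collect_countable_Ex lev)
  have Bad_sets: "Bad \<epsilon> \<in> sets M" for \<epsilon>
    unfolding Bad_def by (intro sets.sets_Collect_countable_All sets.sets_Collect_countable_Ex lev)
  have B_bound: "measure M (B \<epsilon> N) \<le> Fb\<^sup>2 * R N / \<epsilon>\<^sup>2" if ep: "\<epsilon> > 0" for \<epsilon> N
  proof -
    have BU: "B \<epsilon> N = (\<Union>L. E \<epsilon> N L)"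
    proof
      show "B \<epsilon> N \<subseteq> (\<Union>L. E \<epsilon> N L)"
      proof
        fix x assume "x \<in> B \<epsilon> N"
        then obtain m where "x \<in> space M" "Suc N \<le> m" "\<epsilon> \<le> \<bar>T a f N m x\<bar>" by (auto simp: B_def)
        hence "x \<in> E \<epsilon> N m" by (auto simp: E_def)
        thus "x \<in> (\<Union>L. E \<epsilon> N L)" by blast
      qed
    qed (auto simp: B_def E_def)
    have "(\<lambda>L. measure M (E \<epsilon> N L)) \<longlonglongrightarrow> measure M (\<Union>L. E \<epsilon> N L)"
    proof (rule finite_Lim_measure_incseq)
      show "range (E \<epsilon> N) \<subseteq> sets M" using E_sets by auto
      show "incseq (E \<epsilon> N)" by (rule monoI) (auto simp: E_def)
    qed
    hence lim: "(\<lambda>L. measure M (E \<epsilon> N L)) \<longlonglongrightarrow> measure M (B \<epsilon> N)" by (simp add: BU)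
    show ?thesis
    proof (rule LIMSEQ_le_const2[OF lim], intro exI allI impI)
      fix L assume NL: "N \<le> L"
      have "\<epsilon>\<^sup>2 * measure M (E \<epsilon> N L) \<le> Fb\<^sup>2 * (\<Sum>t\<in>{Suc N..<Suc L}. (a t)\<^sup>2)"
        unfolding E_def by (rule kolm[OF ep NL mf fb])
      also have "\<dots> \<le> Fb\<^sup>2 * R N" by (intro mult_left_mono Rb NL) simp
      finally show "measure M (E \<epsilon> N L) \<le> Fb\<^sup>2 * R N / \<epsilon>\<^sup>2"
        using ep by (simp add: pos_le_divide_eq mult.commute)
    qed
  qed
  have Bad_null: "Bad \<epsilon> \<in> null_sets M" if ep: "\<epsilon> > 0" for \<epsilon>
  proof -
    have "(\<lambda>N. Fb\<^sup>2 * R N / \<epsilon>\<^sup>2) \<longlonglongrightarrow> Fb\<^sup>2 * 0 / \<epsilon>\<^sup>2"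
      by (intro tendsto_intros R0) (use ep in simp)
    hence lim: "(\<lambda>N. Fb\<^sup>2 * R N / \<epsilon>\<^sup>2) \<longlonglongrightarrow> 0" by simp
    have "measure M (Bad \<epsilon>) \<le> 0"
    proof (rule LIMSEQ_le_const[OF lim], intro exI allI impI)
      fix N :: nat
      have "measure M (Bad \<epsilon>) \<le> measure M (B \<epsilon> N)"
        by (rule finite_measure_mono[OF _ B_sets]) (auto simp: Bad_def B_def)
      also have "\<dots> \<le> Fb\<^sup>2 * R N / \<epsilon>\<^sup>2" by (rule B_bound[OF ep])
      finally show "measure M (Bad \<epsilon>) \<le> Fb\<^sup>2 * R N / \<epsilon>\<^sup>2" .
    qed
    hence "measure M (Bad \<epsilon>) = 0" by (simp add: measure_le_0_iff)
    thus ?thesis using Bad_sets[of \<epsilon>] by (simp add: null_sets_def emeasure_eq_measure)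
  qed
  have "AE \<omega> in M. \<forall>j::nat. \<omega> \<notin> Bad (1 / real (Suc j))"
  proof (subst AE_all_countable, intro allI)
    fix j :: nat
    show "AE \<omega> in M. \<omega> \<notin> Bad (1 / real (Suc j))"
      by (rule AE_I'[OF Bad_null]) auto
  qed
  thus ?thesis
  proof (rule AE_mp, intro AE_I2 impI)
    fix \<omega> assume w: "\<omega> \<in> space M" and nb: "\<forall>j::nat. \<omega> \<notin> Bad (1 / real (Suc j))"
    define g where "g t = a t * f (X t \<omega>)" for t
    define s where "s m = (\<Sum>t\<in>{1..<Suc m}. g t)" for m
    have sT: "s m = s N + T a f N m \<omega>" if "N \<le> m" for N m
      unfolding s_def T_def g_def
      using sum.atLeastLessThan_concat[of 1 "Suc N" "Suc m" "\<lambda>t. a t * f (X t \<omega>)"] that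
      by (simp del: sum.atLeastLessThan_Suc)
    have small: "\<exists>N. \<forall>m\<ge>N. \<bar>T a f N m \<omega>\<bar> < 1 / real (Suc j)" for j
    proof -
      from nb have "\<omega> \<notin> Bad (1 / real (Suc j))" by blast
      then obtain N where N: "\<forall>m. Suc N \<le> m \<longrightarrow> \<not> 1 / real (Suc j) \<le> \<bar>T a f N m \<omega>\<bar>"
        using w by (auto simp: Bad_def)
      have "\<bar>T a f N m \<omega>\<bar> < 1 / real (Suc j)" if "m \<ge> N" for m
      proof (cases "m = N")
        case True thus ?thesis by (simp add: T_self)
      next
        case False thus ?thesis using N that by (simp add: not_le)
      qed
      thus ?thesis by blast
    qed
    have "Cauchy s"
    proof (rule CauchyI)
      fix e :: real assume e: "e > 0"
      obtain j where j: "inverse (real (Suc j)) < e / 2" using reals_Archimedean[of "e/2"] e by auto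
      obtain N where N: "\<forall>m\<ge>N. \<bar>T a f N m \<omega>\<bar> < 1 / real (Suc j)" using small by blast
      show "\<exists>M. \<forall>m\<ge>M. \<forall>n\<ge>M. norm (s m - s n) < e"
      proof (intro exI allI impI)
        fix m k assume m: "m \<ge> N" and k: "k \<ge> N"
        have "s m - s k = T a f N m \<omega> - T a f N k \<omega>" using sT[OF m] sT[OF k] by simp
        moreover have "\<bar>T a f N m \<omega>\<bar> < e / 2" "\<bar>T a f N k \<omega>\<bar> < e / 2"
          using N m k j by (auto simp: inverse_eq_divide)
        ultimately show "norm (s m - s k) < e" by simp
      qed
    qed
    hence cs: "convergent s" by (simp add: Cauchy_convergent_iff)
    have "(\<Sum>i<m. g (Suc i)) = s m" for m
    proof (induction m)
      case 0 thus ?case by (simp add: s_def)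
    next
      case (Suc m)
      have "s (Suc m) = s m + g (Suc m)" unfolding s_def by (subst sum.atLeastLessThan_Suc) auto
      thus ?case using Suc by simp
    qed
    hence "summable (\<lambda>i. g (Suc i))" using cs by (simp add: summable_iff_convergent)
    thus "summable (\<lambda>t. a t * f (X t \<omega>))" unfolding g_def by (subst (asm) summable_Suc_iff)
  qed
qed

end

lemma grad_comp:
  fixes W :: "nat \<Rightarrow> real" and \<rho> :: "nat \<Rightarrow> 'm::finite \<Rightarrow> real" and Z :: "nat \<Rightarrow> real"
  shows "grad (\<lambda>\<theta>::real^'m. C * (\<Sum>k=1..n. \<Sum>i\<in>UNIV. W k * \<rho> k i * (Z k - \<theta>$i)\<^sup>2)) \<theta>
     = (\<chi> i. 2 * C * ((\<Sum>k=1..n. W k * \<rho> k i) * \<theta>$i - (\<Sum>k=1..n. W k * \<rho> k i * Z k)))"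
  unfolding grad_quad
  by (rule vec_eq_iff[THEN iffD2], simp add: sum_subtractf sum_negf sum_distrib_left sum_distrib_right algebra_simps)

lemma sum_nonneg_zero_mult:
  fixes \<alpha> Y :: "nat \<Rightarrow> real"
  assumes "finite S" "\<And>k. k \<in> S \<Longrightarrow> \<alpha> k \<ge> 0" "(\<Sum>k\<in>S. \<alpha> k) = 0"
  shows "(\<Sum>k\<in>S. \<alpha> k * Y k) = 0"
proof -
  have "\<forall>k\<in>S. \<alpha> k = 0" using sum_nonneg_eq_0_iff[OF assms(1)] assms(2,3) by blast
  thus ?thesis by simp
qed

lemma probsum:
  assumes "set_pmf \<pi> \<subseteq> Cfg n"
  shows "measure_pmf.prob \<pi> A = (\<Sum>x\<in>Cfg n. (if x \<in> A then 1 else 0) * pmf \<pi> (x :: nat \<Rightarrow> 'm::finite))"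
proof -
  have "measure_pmf.prob \<pi> A = measure_pmf.prob \<pi> (A \<inter> set_pmf \<pi>)" by (simp add: measure_Int_set_pmf)
  also have "A \<inter> set_pmf \<pi> = (A \<inter> Cfg n) \<inter> set_pmf \<pi>" using assms by auto
  also have "measure_pmf.prob \<pi> \<dots> = measure_pmf.prob \<pi> (A \<inter> Cfg n)" by (simp add: measure_Int_set_pmf)
  also have "\<dots> = (\<Sum>x\<in>A \<inter> Cfg n. pmf \<pi> x)"
    by (rule measure_measure_pmf_finite) (simp add: finite_Cfg)
  also have "\<dots> = sum (pmf \<pi>) (Cfg n \<inter> A)" by (simp add: Int_commute)
  also have "\<dots> = (\<Sum>x\<in>Cfg n. if x \<in> A then pmf \<pi> x else 0)"
    by (rule sum.inter_restrict) (simp add: finite_Cfg)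
  also have "\<dots> = (\<Sum>x\<in>Cfg n. (if x \<in> A then 1 else 0) * pmf \<pi> x)"
    by (intro sum.cong) auto
  finally show ?thesis .
qed

theorem theorem2:
  fixes y h :: real and K :: "real \<Rightarrow> real" and n :: nat and Y :: "nat \<Rightarrow> real"
    and \<Theta> :: "(real ^ 'm::finite) set" and \<pi> :: "(nat \<Rightarrow> 'm) pmf"
    and M :: "'w measure" and X :: "nat \<Rightarrow> 'w \<Rightarrow> (nat \<Rightarrow> 'm)"
    and \<theta>0 :: "real ^ 'm" and \<gamma> :: "nat \<Rightarrow> real"
  assumes h_pos: "h > 0"
    and kernel: "is_kernel K"
    and n_pos: "n \<ge> 1"
    and Theta_convex: "convex \<Theta>" and Theta_open: "open \<Theta>"
    and pi_support: "set_pmf \<pi> \<subseteq> Cfg n"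
    and M_prob: "prob_space M"
    and X_meas: "\<And>t. t \<ge> 1 \<Longrightarrow> X t \<in> M \<rightarrow>\<^sub>M count_space UNIV"
    and X_cfg: "\<And>t \<omega>. t \<ge> 1 \<Longrightarrow> \<omega> \<in> space M \<Longrightarrow> X t \<omega> \<in> Cfg n"
    and X_cond_law: "\<And>t S B. t \<ge> 1 \<Longrightarrow>
          measure M {\<omega> \<in> space M. (\<lambda>s\<in>{1..<t}. X s \<omega>) \<in> S \<and> X t \<omega> \<in> B}
        = measure M {\<omega> \<in> space M. (\<lambda>s\<in>{1..<t}. X s \<omega>) \<in> S} * measure_pmf.prob \<pi> B"
    and theta0: "\<theta>0 \<in> \<Theta>"
    and gamma_pos: "\<And>t. \<gamma> t > 0"
    and gamma_div: "\<not> summable \<gamma>"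
    and gamma_sq: "summable (\<lambda>t. (\<gamma> t)\<^sup>2)"
    and compact_closure: "AE \<omega> in M.
          compact (closure (range (\<lambda>t. sgd_avg y h K Y n \<theta>0 \<gamma> (\<lambda>s. X s \<omega>) t)))
        \<and> closure (range (\<lambda>t. sgd_avg y h K Y n \<theta>0 \<gamma> (\<lambda>s. X s \<omega>) t)) \<subseteq> \<Theta>"
  shows "AE \<omega> in M.
           ((\<lambda>t. grad (u y h K Y n \<pi>) (sgd_avg y h K Y n \<theta>0 \<gamma> (\<lambda>s. X s \<omega>) t)) \<longlonglongrightarrow> 0)
         \<and> (\<exists>\<theta>s. (\<lambda>t. sgd_avg y h K Y n \<theta>0 \<gamma> (\<lambda>s. X s \<omega>) t) \<longlonglongrightarrow> \<theta>s
                 \<and> grad (u y h K Y n \<pi>) \<theta>s = 0)"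
proof -
  interpret S: ssetup M X \<pi> n
    using M_prob X_meas X_cfg X_cond_law by (auto simp: ssetup_def ssetup_axioms_def)
  define c where "c = 1 / (real n * h)"
  have c_pos: "c > 0" using h_pos n_pos by (simp add: c_def)
  define w where "w k = Kh K h (y - Y k)" for k
  have w_nn: "w k \<ge> 0" for k using kernel by (simp add: w_def Kh_def is_kernel_def)
  define Sx where "Sx i x = (\<Sum>k=1..n. w k * (if x (k+1) = i then 1 else 0))" for i and x :: "nat \<Rightarrow> 'm"
  define Ax where "Ax i x = (\<Sum>k=1..n. w k * (if x (k+1) = i then 1 else 0) * Y (k+1))" for i and x :: "nat \<Rightarrow> 'm"
  define p where "p k i = measure_pmf.prob \<pi> {x. x (k+1) = i}" for k i
  define Bc where "Bc i = (\<Sum>k=1..n. w k * p k i)" for i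
  define Ac where "Ac i = (\<Sum>k=1..n. w k * p k i * Y (k+1))" for i
  have gradU: "grad (U y h K Y n x) \<theta> $ i = 2 * c * (Sx i x * \<theta> $ i - Ax i x)" for x \<theta> i
  proof -
    have "U y h K Y n x = (\<lambda>\<theta>. c * (\<Sum>k=1..n. \<Sum>i\<in>UNIV. w k * (\<lambda>k i. if x (k+1) = i then 1 else 0) k i * ((\<lambda>k. Y (k+1)) k - \<theta>$i)\<^sup>2))"
      by (simp add: fun_eq_iff U_def c_def w_def)
    hence "grad (U y h K Y n x) \<theta> = (\<chi> i. 2 * c * ((\<Sum>k=1..n. w k * (if x (k+1) = i then 1 else 0)) * \<theta>$i
       - (\<Sum>k=1..n. w k * (if x (k+1) = i then 1 else 0) * Y (k+1))))"
      using grad_comp[where C=c and W=w and \<rho>="\<lambda>k i. if x (k+1) = i then 1 else 0" and n=n and Z="\<lambda>k. Y (k+1)" and \<theta>=\<theta>] by simp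
    thus ?thesis by (simp add: Sx_def Ax_def)
  qed
  have gradu: "grad (u y h K Y n \<pi>) \<theta> = (\<chi> i. 2 * c * (Bc i * \<theta> $ i - Ac i))" for \<theta>
  proof -
    have "u y h K Y n \<pi> = (\<lambda>\<theta>. c * (\<Sum>k=1..n. \<Sum>i\<in>UNIV. w k * p k i * ((\<lambda>k. Y (k+1)) k - \<theta>$i)\<^sup>2))"
      by (simp add: fun_eq_iff u_def c_def w_def p_def)
    thus ?thesis using grad_comp[where C=c and W=w and \<rho>=p and n=n and Z="\<lambda>k. Y (k+1)" and \<theta>=\<theta>] by (simp add: Bc_def Ac_def)
  qed
  have p_nn: "p k i \<ge> 0" for k i by (simp add: p_def)
  have Bc_nn: "Bc i \<ge> 0" for i unfolding Bc_def using w_nn p_nn by (intro sum_nonneg) auto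
  have Bc0: "Ac i = 0" if "Bc i = 0" for i
    unfolding Ac_def using sum_nonneg_zero_mult[of "{1..n}" "\<lambda>k. w k * p k i" "\<lambda>k. Y (k+1)"] that w_nn p_nn
    by (simp add: Bc_def)
  define \<theta>s where "\<theta>s = (\<chi> i. if Bc i > 0 then Ac i / Bc i else \<theta>0 $ i)"
  have grad_star: "grad (u y h K Y n \<pi>) \<theta>s = 0"
  proof -
    have "Bc i * \<theta>s $ i - Ac i = 0" for i
    proof (cases "Bc i > 0")
      case True thus ?thesis by (simp add: \<theta>s_def)
    next
      case False hence "Bc i = 0" using Bc_nn[of i] by simp
      thus ?thesis using Bc0[of i] by simp
    qed
    thus ?thesis by (simp add: gradu vec_eq_iff)
  qed
  define a where "a t = 2 * c * \<gamma> t" for t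
  have a_pos: "a t > 0" for t using c_pos gamma_pos[of t] by (simp add: a_def)
  have a_sq: "summable (\<lambda>t. (a t)\<^sup>2)"
    using summable_mult[OF gamma_sq, of "(2*c)\<^sup>2"] by (simp add: a_def power_mult_distrib)
  have a_lim: "a \<longlonglongrightarrow> 0"
  proof -
    have "(\<lambda>t. (\<gamma> t)\<^sup>2) \<longlonglongrightarrow> 0" by (rule summable_LIMSEQ_zero[OF gamma_sq])
    hence "(\<lambda>t. sqrt ((\<gamma> t)\<^sup>2)) \<longlonglongrightarrow> sqrt 0" by (intro tendsto_intros)
    hence "\<gamma> \<longlonglongrightarrow> 0" using gamma_pos by (simp add: less_imp_le)
    hence "(\<lambda>t. 2 * c * \<gamma> t) \<longlonglongrightarrow> 2 * c * 0" by (intro tendsto_intros)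
    thus ?thesis by (simp add: a_def[abs_def])
  qed
  have a_nsum: "\<not> summable a"
  proof
    assume "summable a"
    hence "summable (\<lambda>t. (1 / (2 * c)) * a t)" by (rule summable_mult)
    hence "summable \<gamma>" using c_pos by (simp add: a_def)
    thus False using gamma_div by simp
  qed
  have sgd_rec: "sgd y h K Y n \<theta>0 \<gamma> X' (Suc t) $ i = sgd y h K Y n \<theta>0 \<gamma> X' t $ i
      - a (Suc t) * (Sx i (X' (Suc t)) * sgd y h K Y n \<theta>0 \<gamma> X' t $ i - Ax i (X' (Suc t)))" for X' t i
    by (simp add: gradU a_def algebra_simps)
  have probsum': "measure_pmf.prob \<pi> A = (\<Sum>x\<in>Cfg n. (if x \<in> A then 1 else 0) * pmf \<pi> x)" for A
    by (rule probsum[OF pi_support])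
  have meanS: "(\<Sum>x\<in>Cfg n. Sx i x * pmf \<pi> x) = Bc i" for i
  proof -
    have "(\<Sum>x\<in>Cfg n. Sx i x * pmf \<pi> x) = (\<Sum>k=1..n. w k * (\<Sum>x\<in>Cfg n. (if x (k+1) = i then 1 else 0) * pmf \<pi> x))"
      unfolding Sx_def by (simp add: sum_distrib_left sum_distrib_right mult_ac sum.swap[of _ "Cfg n"])
    also have "\<dots> = Bc i" unfolding Bc_def p_def probsum' by simp
    finally show ?thesis .
  qed
  have meanA: "(\<Sum>x\<in>Cfg n. Ax i x * pmf \<pi> x) = Ac i" for i
  proof -
    have "(\<Sum>x\<in>Cfg n. Ax i x * pmf \<pi> x) = (\<Sum>k=1..n. w k * (\<Sum>x\<in>Cfg n. (if x (k+1) = i then 1 else 0) * pmf \<pi> x) * Y (k+1))"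
      unfolding Ax_def by (simp add: sum_distrib_left sum_distrib_right mult_ac sum.swap[of _ "Cfg n"])
    also have "\<dots> = Ac i" unfolding Ac_def p_def probsum' by simp
    finally show ?thesis .
  qed
  have pmf1: "(\<Sum>x\<in>Cfg n. pmf \<pi> x) = 1"
    using probsum'[of UNIV] by simp
  have Sx_bd: "0 \<le> Sx i x \<and> Sx i x \<le> (\<Sum>k=1..n. w k)" for i x
    unfolding Sx_def using w_nn by (auto intro!: sum_nonneg sum_mono)
  have coord: "AE \<omega> in M. (\<lambda>t. sgd y h K Y n \<theta>0 \<gamma> (\<lambda>s. X s \<omega>) t $ i) \<longlonglongrightarrow> \<theta>s $ i" for i
  proof (cases "Bc i > 0")
    case Bpos: True
    define fx where "fx x = Ax i x - Sx i x * (Ac i / Bc i)" for x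
    define fs where "fs x = Sx i x - Bc i" for x
    have m1: "S.mean0 fx"
    proof -
      have "(\<Sum>x\<in>Cfg n. fx x * pmf \<pi> x) = (\<Sum>x\<in>Cfg n. Ax i x * pmf \<pi> x) - (Ac i / Bc i) * (\<Sum>x\<in>Cfg n. Sx i x * pmf \<pi> x)"
      proof -
        have "(\<Sum>x\<in>Cfg n. fx x * pmf \<pi> x) = (\<Sum>x\<in>Cfg n. Ax i x * pmf \<pi> x - (Ac i / Bc i) * (Sx i x * pmf \<pi> x))"
          unfolding fx_def by (intro sum.cong refl) (simp add: algebra_simps)
        thus ?thesis by (simp only: sum_subtractf sum_distrib_left)
      qed
      also have "\<dots> = 0" using meanS[of i] meanA[of i] Bpos by simp
      finally show ?thesis unfolding S.mean0_def .
    qed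
    have m2: "S.mean0 fs" unfolding S.mean0_def fs_def
      using meanS[of i] pmf1 by (simp add: left_diff_distrib sum_subtractf sum_distrib_left[symmetric])
    have ae1: "AE \<omega> in M. summable (\<lambda>t. a t * fx (X t \<omega>))" by (rule S.as_summable[OF m1 a_sq])
    have ae2: "AE \<omega> in M. summable (\<lambda>t. a t * fs (X t \<omega>))" by (rule S.as_summable[OF m2 a_sq])
    show ?thesis using ae1 ae2
    proof eventually_elim
      case (elim \<omega>)
      define s where "s t = Sx i (X t \<omega>)" for t
      define e where "e t = sgd y h K Y n \<theta>0 \<gamma> (\<lambda>s. X s \<omega>) t $ i - Ac i / Bc i" for t
      have "e \<longlonglongrightarrow> 0"
      proof (rule det_conv[where a=a and s=s and g="\<lambda>t. a t * fx (X t \<omega>)"])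
        obtain T where T: "\<And>t. t \<ge> T \<Longrightarrow> \<bar>a t\<bar> < 1 / (1 + (\<Sum>k=1..n. w k))"
          using LIMSEQ_D[OF a_lim, of "1 / (1 + (\<Sum>k=1..n. w k))"] w_nn
          by (metis add_pos_nonneg real_norm_def diff_zero sum_nonneg zero_less_divide_1_iff zero_less_one)
        show "\<exists>T. \<forall>t\<ge>T. 0 \<le> a t * s t \<and> a t * s t \<le> 1"
        proof (intro exI allI impI conjI)
          fix t assume t: "t \<ge> T"
          show "0 \<le> a t * s t" using a_pos[of t] Sx_bd by (simp add: s_def)
          have W0: "0 \<le> (\<Sum>k=1..n. w k)" using w_nn by (simp add: sum_nonneg)
          have "a t * s t \<le> a t * (\<Sum>k=1..n. w k)"
            using a_pos[of t] Sx_bd by (intro mult_left_mono) (auto simp: s_def less_imp_le)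
          also have "\<dots> \<le> a t * (1 + (\<Sum>k=1..n. w k))" using a_pos[of t] by simp
          also have "\<dots> \<le> 1" using T[OF t] a_pos[of t] W0 by (simp add: field_simps)
          finally show "a t * s t \<le> 1" .
        qed
      next
        show "\<not> summable (\<lambda>t. a t * s t)"
        proof
          assume as: "summable (\<lambda>t. a t * s t)"
          have "summable (\<lambda>t. a t * s t - a t * fs (X t \<omega>))" using as elim(2) by (rule summable_diff)
          hence "summable (\<lambda>t. Bc i * a t)" by (simp add: fs_def s_def algebra_simps)
          hence "summable (\<lambda>t. (1 / Bc i) * (Bc i * a t))" by (rule summable_mult)
          hence "summable a" using Bpos by simp
          thus False using a_nsum by simp
        qed
      next
        show "summable (\<lambda>t. a t * fx (X t \<omega>))" by (rule elim(1))
      next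
        fix t
        show "e (Suc t) = (1 - a (Suc t) * s (Suc t)) * e t + a (Suc t) * fx (X (Suc t) \<omega>)"
          unfolding e_def s_def fx_def sgd_rec by (simp add: algebra_simps)
      qed
      hence "(\<lambda>t. e t + Ac i / Bc i) \<longlonglongrightarrow> 0 + Ac i / Bc i" by (intro tendsto_intros)
      thus ?case using Bpos by (simp add: e_def \<theta>s_def)
    qed
  next
    case False
    hence B0: "Bc i = 0" using Bc_nn[of i] by simp
    have supp0: "Sx i x = 0 \<and> Ax i x = 0" if x: "x \<in> set_pmf \<pi>" for x
    proof -
      have xc: "x \<in> Cfg n" using x pi_support by auto
      have "\<forall>z\<in>Cfg n. Sx i z * pmf \<pi> z = 0"
        using sum_nonneg_eq_0_iff[OF finite_Cfg[of n], where f="\<lambda>z. Sx i z * pmf \<pi> z"] meanS[of i] B0 Sx_bd by auto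
      hence "Sx i x * pmf \<pi> x = 0" using xc by auto
      moreover have "pmf \<pi> x > 0" using x by (simp add: pmf_positive)
      ultimately have S0: "Sx i x = 0" by simp
      have "Ax i x = 0" unfolding Ax_def
        using sum_nonneg_zero_mult[of "{1..n}" "\<lambda>k. w k * (if x (k+1) = i then 1 else 0)" "\<lambda>k. Y (k+1)"] S0 w_nn
        by (simp add: Sx_def)
      thus ?thesis using S0 by simp
    qed
    have "AE \<omega> in M. \<forall>t. X (Suc t) \<omega> \<in> set_pmf \<pi>"
      by (subst AE_all_countable) (intro allI S.X_in_support, simp)
    thus ?thesis
    proof eventually_elim
      case (elim \<omega>)
      have "sgd y h K Y n \<theta>0 \<gamma> (\<lambda>s. X s \<omega>) t $ i = \<theta>0 $ i" for t
      proof (induction t)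
        case (Suc t) thus ?case using supp0[OF elim[rule_format, of t]] by (simp add: sgd_rec del: sgd.simps)
      qed simp
      thus ?case using False by (simp add: \<theta>s_def)
    qed
  qed
  have "AE \<omega> in M. \<forall>i\<in>UNIV. (\<lambda>t. sgd y h K Y n \<theta>0 \<gamma> (\<lambda>s. X s \<omega>) t $ i) \<longlonglongrightarrow> \<theta>s $ i"
    by (rule AE_finite_allI) (auto intro: coord)
  thus ?thesis
  proof eventually_elim
    case (elim \<omega>)
    have "(\<lambda>t. sgd y h K Y n \<theta>0 \<gamma> (\<lambda>s. X s \<omega>) t) \<longlonglongrightarrow> \<theta>s"
      using elim by (intro vec_tendstoI) auto
    hence avg: "(\<lambda>t. sgd_avg y h K Y n \<theta>0 \<gamma> (\<lambda>s. X s \<omega>) t) \<longlonglongrightarrow> \<theta>s"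
      unfolding sgd_avg_def by (rule cesaro_vec)
    have "(\<lambda>t. (\<chi> i. 2 * c * (Bc i * sgd_avg y h K Y n \<theta>0 \<gamma> (\<lambda>s. X s \<omega>) t $ i - Ac i)))
        \<longlonglongrightarrow> (\<chi> i. 2 * c * (Bc i * \<theta>s $ i - Ac i))"
      by (intro tendsto_intros avg)
    hence "(\<lambda>t. grad (u y h K Y n \<pi>) (sgd_avg y h K Y n \<theta>0 \<gamma> (\<lambda>s. X s \<omega>) t)) \<longlonglongrightarrow> grad (u y h K Y n \<pi>) \<theta>s"
      by (simp add: gradu)
    hence "(\<lambda>t. grad (u y h K Y n \<pi>) (sgd_avg y h K Y n \<theta>0 \<gamma> (\<lambda>s. X s \<omega>) t)) \<longlonglongrightarrow> 0"
      by (simp add: grad_star)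
    thus ?case using avg grad_star by blast
  qed
qed

end
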